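(* Let $I\subseteq\mathbb{R}$ be an open interval (possibly unbounded), $\Sigma=I\times\mathbb{R}$, and let $F\in C^\omega(\Sigma,\mathbb{R}^2)$ (real analytic) be a non-singular map of the form $F(x,y)=\big(p_2(x)y^2+p_1(x)y+p_0(x),\,q_2(x)y^2+q_1(x)y+q_0(x)\big)$. If either $p_2(x)\neq0$ for all $x\in I$ or $q_2(x)\neq0$ for all $x\in I$, then $F$ is injective.
   Context: For $F=(P,Q)$, $d_F=P_xQ_y-P_yQ_x$ is the Jacobian determinant; $F$ is non-singular if $d_F(x,y)\neq0$ for all $(x,y)\in\Sigma$. *)

theory Defs
  imports "HOL-Analysis.Analysis"
begin

definition real_analytic2_on :: "(real \<times> real \<Rightarrow> real) \<Rightarrow> (real \<times> real) set \<Rightarrow> bool" where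
  "real_analytic2_on f S \<longleftrightarrow>
     (\<forall>z\<in>S. \<exists>r>0. ball z r \<subseteq> S \<and> (\<exists>c::nat \<Rightarrow> nat \<Rightarrow> real.
        \<forall>w\<in>ball z r. ((\<lambda>(m,n). c m n * (fst w - fst z) ^ m * (snd w - snd z) ^ n) has_sum f w) UNIV))"

definition real_analytic_map_on :: "(real \<times> real \<Rightarrow> real \<times> real) \<Rightarrow> (real \<times> real) set \<Rightarrow> bool" where
  "real_analytic_map_on F S \<longleftrightarrow>
     real_analytic2_on (\<lambda>z. fst (F z)) S \<and> real_analytic2_on (\<lambda>z. snd (F z)) S"

definition jac_det :: "(real \<times> real \<Rightarrow> real \<times> real) \<Rightarrow> real \<times> real \<Rightarrow> real" where
  "jac_det F z = (let x = fst z; y = snd z in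
      deriv (\<lambda>t. fst (F (t, y))) x * deriv (\<lambda>t. snd (F (x, t))) y
    - deriv (\<lambda>t. fst (F (x, t))) y * deriv (\<lambda>t. snd (F (t, y))) x)"

end

theory Submission imports Defs begin

lemma cubic_root:
  fixes a b c d :: real
  assumes "a \<noteq> 0"
  shows "\<exists>y. a*y^3 + b*y^2 + c*y + d = 0"
proof -
  define B C D where "B = b/a" "C = c/a" "D = d/a"
  define f where "f = (\<lambda>y::real. y^3 + B*y^2 + C*y + D)"
  define M where "M = 1 + \<bar>B\<bar> + \<bar>C\<bar> + \<bar>D\<bar>"
  have M1: "M \<ge> 1" unfolding M_def by simp
  have MM1: "M \<le> M^2" using M1 mult_left_mono[of 1 M M] by (simp add: power2_eq_square)
  have MM2: "1 \<le> M^2" using M1 mult_mono[of 1 M 1 M] by (simp add: power2_eq_square)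
  note MM = MM1 MM2
  have h1: "B*M^2 \<ge> - \<bar>B\<bar>*M^2" using mult_right_mono[of "-\<bar>B\<bar>" B "M^2"] by simp
  have h2: "C*M \<ge> - \<bar>C\<bar>*M^2"
  proof -
    have "C*M \<ge> - \<bar>C\<bar>*M" using M1 mult_right_mono[of "-\<bar>C\<bar>" C M] by simp
    moreover have "\<bar>C\<bar>*M \<le> \<bar>C\<bar>*M^2" using mult_left_mono[OF MM1, of "\<bar>C\<bar>"] by simp
    ultimately show ?thesis by linarith
  qed
  have h3: "D \<ge> - \<bar>D\<bar>*M^2"
  proof -
    have "\<bar>D\<bar> \<le> \<bar>D\<bar>*M^2" using mult_left_mono[OF MM2, of "\<bar>D\<bar>"] by simp
    then show ?thesis by linarith
  qed
  have h1': "B*M^2 \<le> \<bar>B\<bar>*M^2" using mult_right_mono[of B "\<bar>B\<bar>" "M^2"] by simp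
  have h2': "-C*M \<le> \<bar>C\<bar>*M^2"
  proof -
    have "-C*M \<le> \<bar>C\<bar>*M" using M1 mult_right_mono[of "-C" "\<bar>C\<bar>" M] by simp
    moreover have "\<bar>C\<bar>*M \<le> \<bar>C\<bar>*M^2" using mult_left_mono[OF MM1, of "\<bar>C\<bar>"] by simp
    ultimately show ?thesis by linarith
  qed
  have h3': "D \<le> \<bar>D\<bar>*M^2"
  proof -
    have "\<bar>D\<bar> \<le> \<bar>D\<bar>*M^2" using mult_left_mono[OF MM2, of "\<bar>D\<bar>"] by simp
    then show ?thesis by linarith
  qed
  have M3: "M^3 = M * M^2" by (simp add: power2_eq_square power3_eq_cube)
  have "M^3 - (\<bar>B\<bar>+\<bar>C\<bar>+\<bar>D\<bar>)*M^2 = M^2"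
  proof -
    have "M^3 - (\<bar>B\<bar>+\<bar>C\<bar>+\<bar>D\<bar>)*M^2 = M^2*(M - (\<bar>B\<bar>+\<bar>C\<bar>+\<bar>D\<bar>))" by (simp add: power2_eq_square power3_eq_cube algebra_simps)
    also have "M - (\<bar>B\<bar>+\<bar>C\<bar>+\<bar>D\<bar>) = 1" unfolding M_def by simp
    finally show ?thesis by simp
  qed
  note key = this
  have "f M = M^3 + B*M^2 + C*M + D" unfolding f_def by simp
  then have fpos: "f M \<ge> 0" using h1 h2 h3 key MM2 by (simp add: algebra_simps)
  have "f (-M) = -(M^3) + B*M^2 - C*M + D" unfolding f_def by (simp add: power2_eq_square power3_eq_cube)
  then have fneg: "f (-M) \<le> 0" using h1' h2' h3' key MM2 by (simp add: algebra_simps)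
  have "continuous_on {-M..M} f" unfolding f_def by (intro continuous_intros)
  then obtain y where "f y = 0" using IVT'[of f "-M" 0 M] fpos fneg M1 by auto
  then have "a * f y = 0" by simp
  moreover have "a * f y = a*y^3 + b*y^2 + c*y + d" unfolding f_def B_C_D_def using assms by (simp add: algebra_simps)
  ultimately show ?thesis by auto
qed

lemma analytic_diff_x:
  assumes "real_analytic2_on f S" "(x,y) \<in> S"
  shows "(\<lambda>t. f (t,y)) differentiable (at x)"
proof -
  obtain r c where r: "r > 0" "ball (x,y) r \<subseteq> S"
    and hs: "\<And>w. w \<in> ball (x,y) r \<Longrightarrow> ((\<lambda>(m,n). c m n * (fst w - x) ^ m * (snd w - y) ^ n) has_sum f w) UNIV"
    using assms unfolding real_analytic2_on_def by fastforce
  have hs1: "((\<lambda>m. c m 0 * h^m) has_sum f (x+h,y)) UNIV" if "\<bar>h\<bar> < r" for h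
  proof -
    have "(x+h,y) \<in> ball (x,y) r" using that by (simp add: dist_Pair_Pair dist_real_def)
    from hs[OF this] have "((\<lambda>(m,n). c m n * h ^ m * 0 ^ n) has_sum f (x+h,y)) UNIV" by simp
    then have "((\<lambda>(m,n). c m n * h ^ m * 0 ^ n) has_sum f (x+h,y)) (range (\<lambda>m. (m,0::nat)))"
      by (subst has_sum_cong_neutral[where T=UNIV]) auto
    then show ?thesis by (subst (asm) has_sum_reindex) (auto simp: inj_on_def o_def)
  qed
  define g where "g = (\<lambda>h. \<Sum>m. c m 0 * h^m)"
  have geq: "f (x+h,y) = g h" if "\<bar>h\<bar> < r" for h
    using has_sum_imp_sums[OF hs1[OF that]] unfolding g_def by (simp add: sums_iff)
  have sm: "summable (\<lambda>m. c m 0 * (r/2)^m)"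
    using has_sum_imp_sums[OF hs1[of "r/2"]] r by (auto simp: sums_iff)
  obtain D where "DERIV g 0 :> D"
    using termdiffs_strong[OF sm, of 0] r unfolding g_def by auto
  then have "DERIV g (x + -x) :> D" by simp
  then have "DERIV (\<lambda>t. g (t + -x)) x :> D" by (simp only: DERIV_shift)
  then have "DERIV (\<lambda>t. f (t,y)) x :> D"
  proof (rule has_field_derivative_transform_within_open[where S="ball x r"])
    fix t assume "t \<in> ball x r"
    then have "\<bar>t - x\<bar> < r" by (simp add: dist_real_def abs_minus_commute)
    from geq[OF this] show "g (t + -x) = f (t,y)" by simp
  qed (use r in auto)
  then show ?thesis by (auto simp: real_differentiable_def)
qed

lemma core:
  fixes I :: "real set" and p0 p1 p2 q0 q1 q2 dp0 dp1 dp2 dq0 dq1 dq2 :: "real \<Rightarrow> real"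
  assumes I: "open I" "is_interval I"
    and dP0: "\<And>x. x \<in> I \<Longrightarrow> (p0 has_real_derivative dp0 x) (at x)"
    and dP1: "\<And>x. x \<in> I \<Longrightarrow> (p1 has_real_derivative dp1 x) (at x)"
    and dP2: "\<And>x. x \<in> I \<Longrightarrow> (p2 has_real_derivative dp2 x) (at x)"
    and dQ0: "\<And>x. x \<in> I \<Longrightarrow> (q0 has_real_derivative dq0 x) (at x)"
    and dQ1: "\<And>x. x \<in> I \<Longrightarrow> (q1 has_real_derivative dq1 x) (at x)"
    and dQ2: "\<And>x. x \<in> I \<Longrightarrow> (q2 has_real_derivative dq2 x) (at x)"
    and nz: "\<And>x y. x \<in> I \<Longrightarrow> (dp2 x*y^2 + dp1 x*y + dp0 x)*(2*q2 x*y + q1 x)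
                 - (2*p2 x*y + p1 x)*(dq2 x*y^2 + dq1 x*y + dq0 x) \<noteq> 0"
    and p2nz: "\<And>x. x \<in> I \<Longrightarrow> p2 x \<noteq> 0"
  shows "inj_on (\<lambda>(x, y). (p2 x * y ^ 2 + p1 x * y + p0 x, q2 x * y ^ 2 + q1 x * y + q0 x)) (I \<times> UNIV)"
proof -
  have step1: "dp2 x * q2 x = p2 x * dq2 x" if x: "x \<in> I" for x
  proof (rule ccontr)
    assume ne: "dp2 x * q2 x \<noteq> p2 x * dq2 x"
    define a3 where "a3 = 2*(dp2 x * q2 x - p2 x * dq2 x)"
    define a2 where "a2 = dp2 x * q1 x + 2*dp1 x * q2 x - 2*p2 x * dq1 x - p1 x * dq2 x"
    define a1 where "a1 = dp1 x * q1 x + 2*dp0 x * q2 x - 2*p2 x * dq0 x - p1 x * dq1 x"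
    define a0 where "a0 = dp0 x * q1 x - p1 x * dq0 x"
    have "a3 \<noteq> 0" using ne unfolding a3_def by simp
    then obtain y where y: "a3*y^3 + a2*y^2 + a1*y + a0 = 0" using cubic_root by blast
    have "(dp2 x*y^2 + dp1 x*y + dp0 x)*(2*q2 x*y + q1 x)
                 - (2*p2 x*y + p1 x)*(dq2 x*y^2 + dq1 x*y + dq0 x) = a3*y^3 + a2*y^2 + a1*y + a0"
      unfolding a3_def a2_def a1_def a0_def by (simp add: algebra_simps power2_eq_square power3_eq_cube)
    with y nz[OF x, of y] show False by simp
  qed
  have "\<exists>k. \<forall>x\<in>I. q2 x / p2 x = k"
  proof (rule has_field_derivative_zero_constant)
    show "convex I" using I(2) by (simp add: is_interval_convex)
    fix x assume x: "x \<in> I"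
    have "((\<lambda>x. q2 x / p2 x) has_real_derivative (dq2 x * p2 x - q2 x * dp2 x) / (p2 x * p2 x)) (at x)"
      by (rule DERIV_divide[OF dQ2[OF x] dP2[OF x] p2nz[OF x]])
    moreover have "dq2 x * p2 x - q2 x * dp2 x = 0" using step1[OF x] by (simp add: algebra_simps)
    ultimately show "((\<lambda>x. q2 x / p2 x) has_real_derivative 0) (at x within I)"
      by (simp add: has_field_derivative_at_within)
  qed
  then obtain k where k: "\<And>x. x \<in> I \<Longrightarrow> q2 x / p2 x = k" by blast
  have q2k: "q2 x = k * p2 x" if "x \<in> I" for x using k[OF that] p2nz[OF that] by (simp add: field_simps)
  have dq2k: "dq2 x = k * dp2 x" if x: "x \<in> I" for x
  proof -
    have "p2 x * dq2 x = dp2 x * q2 x" using step1[OF x] by (rule sym)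
    also have "\<dots> = p2 x * (k * dp2 x)" unfolding q2k[OF x] by (simp only: mult_ac)
    finally have "p2 x * dq2 x = p2 x * (k * dp2 x)" .
    then show ?thesis using p2nz[OF x] by simp
  qed
  define r1 where "r1 = (\<lambda>x. q1 x - k * p1 x)"
  define r0 where "r0 = (\<lambda>x. q0 x - k * p0 x)"
  define dr1 where "dr1 = (\<lambda>x. dq1 x - k * dp1 x)"
  define dr0 where "dr0 = (\<lambda>x. dq0 x - k * dp0 x)"
  define Px where "Px = (\<lambda>x y. dp2 x*y^2 + dp1 x*y + dp0 x)"
  define Py where "Py = (\<lambda>x y. 2*p2 x*y + p1 x)"
  have Dform: "(dp2 x*y^2 + dp1 x*y + dp0 x)*(2*q2 x*y + q1 x)
                 - (2*p2 x*y + p1 x)*(dq2 x*y^2 + dq1 x*y + dq0 x) = Px x y * r1 x - Py x y * (dr1 x * y + dr0 x)"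
    if x: "x \<in> I" for x y
    unfolding Px_def Py_def r1_def dr1_def dr0_def q2k[OF x] dq2k[OF x]
    by (simp add: algebra_simps power2_eq_square)
  have nz2: "Px x y * r1 x - Py x y * (dr1 x * y + dr0 x) \<noteq> 0" if "x \<in> I" for x y
    using nz[OF that, of y] Dform[OF that, of y] by simp
  have r1nz: "r1 x \<noteq> 0" if x: "x \<in> I" for x
  proof
    assume "r1 x = 0"
    moreover have "Py x (- p1 x / (2 * p2 x)) = 0" unfolding Py_def using p2nz[OF x] by (simp add: field_simps)
    ultimately show False using nz2[OF x, of "- p1 x / (2 * p2 x)"] by simp
  qed
  have dr1: "(r1 has_real_derivative dr1 x) (at x)" if x: "x \<in> I" for x
    unfolding r1_def dr1_def by (intro DERIV_diff DERIV_cmult dQ1[OF x] dP1[OF x])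
  have dr0: "(r0 has_real_derivative dr0 x) (at x)" if x: "x \<in> I" for x
    unfolding r0_def dr0_def by (intro DERIV_diff DERIV_cmult dQ0[OF x] dP0[OF x])
  define P where "P = (\<lambda>x y. p2 x * y ^ 2 + p1 x * y + p0 x)"
  define R where "R = (\<lambda>x y. r1 x * y + r0 x)"
  have main: False if ab: "a \<in> I" "b \<in> I" "a < b" and eqP: "P a ya = P b yb" and eqR: "R a ya = R b yb" for a b ya yb
  proof -
    define K where "K = R a ya"
    define Y where "Y = (\<lambda>x. (K - r0 x) / r1 x)"
    define t where "t = (\<lambda>x. P x (Y x))"
    have Ya: "Y a = ya" using r1nz[OF ab(1)] unfolding Y_def K_def R_def by (simp add: field_simps)
    have Yb: "Y b = yb" using r1nz[OF ab(2)] eqR unfolding Y_def K_def R_def by (simp add: field_simps)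
    have sub: "{a..b} \<subseteq> I" using mem_is_interval_1_I[OF I(2) ab(1) ab(2)] by auto
    have dt: "(t has_real_derivative (Px z (Y z) * r1 z - Py z (Y z) * (dr1 z * Y z + dr0 z)) / r1 z) (at z)"
      if z: "z \<in> I" for z
    proof -
      have dY: "(Y has_real_derivative ((0 - dr0 z) * r1 z - (K - r0 z) * dr1 z) / (r1 z * r1 z)) (at z)"
        unfolding Y_def by (intro DERIV_divide DERIV_diff DERIV_const dr0[OF z] dr1[OF z] r1nz[OF z])
      have Y'eq: "((0 - dr0 z) * r1 z - (K - r0 z) * dr1 z) / (r1 z * r1 z) = - (dr1 z * Y z + dr0 z) / r1 z"
        unfolding Y_def using r1nz[OF z] by (simp add: field_simps)
      define Y' where "Y' = - (dr1 z * Y z + dr0 z) / r1 z"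
      have dY2: "(Y has_real_derivative Y') (at z)" using dY Y'eq unfolding Y'_def by simp
      have "(t has_real_derivative
          (p2 z * (of_nat 2 * (Y' * Y z ^ (2 - Suc 0))) + dp2 z * Y z ^ 2 + (p1 z * Y' + dp1 z * Y z) + dp0 z)) (at z)"
        unfolding t_def P_def
        by (intro DERIV_add DERIV_mult' DERIV_power dY2 dP0[OF z] dP1[OF z] dP2[OF z])
      moreover have "p2 z * (of_nat 2 * (Y' * Y z ^ (2 - Suc 0))) + dp2 z * Y z ^ 2 + (p1 z * Y' + dp1 z * Y z) + dp0 z
          = (Px z (Y z) * r1 z - Py z (Y z) * (dr1 z * Y z + dr0 z)) / r1 z"
        unfolding Y'_def Px_def Py_def using r1nz[OF z] by (simp add: field_simps power2_eq_square)
      ultimately show ?thesis by simp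
    qed
    have "t a = t b" unfolding t_def Ya Yb using eqP .
    moreover have "continuous_on {a..b} t"
      using sub dt by (intro continuous_at_imp_continuous_on ballI DERIV_isCont) blast+
    moreover have "t differentiable (at x)" if "a < x" "x < b" for x
      proof -
      have "x \<in> I" using sub that by auto
      then show ?thesis using dt[of x] by (auto simp: real_differentiable_def)
    qed
    ultimately obtain z where z: "a < z" "z < b" "(t has_real_derivative 0) (at z)"
      using Rolle[OF ab(3)] by blast
    have zI: "z \<in> I" using sub z by auto
    have "(Px z (Y z) * r1 z - Py z (Y z) * (dr1 z * Y z + dr0 z)) / r1 z = 0"
      using DERIV_unique[OF dt[OF zI] z(3)] .
    then show False using nz2[OF zI, of "Y z"] r1nz[OF zI] by simp
  qed
  show ?thesis
  proof (rule inj_onI)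
    fix u v assume u: "u \<in> I \<times> UNIV" and v: "v \<in> I \<times> UNIV"
      and eq0: "(\<lambda>(x, y). (p2 x * y ^ 2 + p1 x * y + p0 x, q2 x * y ^ 2 + q1 x * y + q0 x)) u =
        (\<lambda>(x, y). (p2 x * y ^ 2 + p1 x * y + p0 x, q2 x * y ^ 2 + q1 x * y + q0 x)) v"
    obtain a ya where uu: "u = (a, ya)" by (cases u)
    obtain b yb where vv: "v = (b, yb)" by (cases v)
    have a: "a \<in> I" using u uu by simp
    have b: "b \<in> I" using v vv by simp
    have eq: "(p2 a * ya\<^sup>2 + p1 a * ya + p0 a, q2 a * ya\<^sup>2 + q1 a * ya + q0 a) =
       (p2 b * yb\<^sup>2 + p1 b * yb + p0 b, q2 b * yb\<^sup>2 + q1 b * yb + q0 b)" using eq0 uu vv by simp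
    have eqP: "P a ya = P b yb" using eq unfolding P_def by simp
    have Qa: "q2 a * ya\<^sup>2 + q1 a * ya + q0 a = k * P a ya + R a ya"
      unfolding P_def R_def r1_def r0_def q2k[OF a] by (simp add: algebra_simps)
    have Qb: "q2 b * yb\<^sup>2 + q1 b * yb + q0 b = k * P b yb + R b yb"
      unfolding P_def R_def r1_def r0_def q2k[OF b] by (simp add: algebra_simps)
    have eqQ: "q2 a * ya\<^sup>2 + q1 a * ya + q0 a = q2 b * yb\<^sup>2 + q1 b * yb + q0 b" using eq by simp
    have eqR: "R a ya = R b yb" using eqQ eqP unfolding Qa Qb by simp
    have "a = b \<and> ya = yb"
    proof (cases a b rule: linorder_cases)
      case less then show ?thesis using main[OF a b less eqP eqR] by simp
    next
      case greater then show ?thesis using main[OF b a greater eqP[symmetric] eqR[symmetric]] by simp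
    next
      case equal
      then have "r1 a * (ya - yb) = 0" using eqR unfolding R_def by (simp add: algebra_simps)
      then show ?thesis using r1nz[OF a] equal by simp
    qed
    then show "u = v" using uu vv by simp
  qed
qed


lemma coeff_diff:
  fixes f :: "real \<times> real \<Rightarrow> real" and a0 a1 a2 :: "real \<Rightarrow> real"
  assumes an: "real_analytic2_on f (I \<times> UNIV)" and x: "x \<in> I"
    and fe: "\<And>t y. f (t, y) = a2 t * y ^ 2 + a1 t * y + a0 t"
  shows "(a0 has_real_derivative deriv a0 x) (at x)" "(a1 has_real_derivative deriv a1 x) (at x)"
    "(a2 has_real_derivative deriv a2 x) (at x)"
proof -
  have d: "(\<lambda>t. f (t, y)) differentiable (at x)" for y
    using analytic_diff_x[OF an] x by simp
  have e0: "a0 = (\<lambda>t. f (t, 0))" by (rule ext) (simp add: fe)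
  have e1: "a1 = (\<lambda>t. (f (t, 1) - f (t, -1)) / 2)" by (rule ext) (simp add: fe)
  have e2: "a2 = (\<lambda>t. (f (t, 1) + f (t, -1)) / 2 - f (t, 0))" by (rule ext) (simp add: fe field_simps)
  have "a0 differentiable (at x)" unfolding e0 by (rule d)
  then show "(a0 has_real_derivative deriv a0 x) (at x)" by (simp add: DERIV_deriv_iff_real_differentiable)
  have "a1 differentiable (at x)" unfolding e1 using d[of 1] d[of "-1"] by (intro derivative_intros) auto
  then show "(a1 has_real_derivative deriv a1 x) (at x)" by (simp add: DERIV_deriv_iff_real_differentiable)
  have "a2 differentiable (at x)" unfolding e2 using d[of 1] d[of "-1"] d[of 0] by (intro derivative_intros) auto
  then show "(a2 has_real_derivative deriv a2 x) (at x)" by (simp add: DERIV_deriv_iff_real_differentiable)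
qed

theorem corollary1:
  fixes I :: "real set" and p0 p1 p2 q0 q1 q2 :: "real \<Rightarrow> real"
    and F :: "real \<times> real \<Rightarrow> real \<times> real"
  assumes "open I" and "is_interval I"
    and "F = (\<lambda>(x, y). (p2 x * y ^ 2 + p1 x * y + p0 x, q2 x * y ^ 2 + q1 x * y + q0 x))"
    and "real_analytic_map_on F (I \<times> UNIV)"
    and "\<forall>z \<in> I \<times> UNIV. jac_det F z \<noteq> 0"
    and "(\<forall>x\<in>I. p2 x \<noteq> 0) \<or> (\<forall>x\<in>I. q2 x \<noteq> 0)"
  shows "inj_on F (I \<times> UNIV)"
proof -
  note Fdef = assms(3)
  have anP: "real_analytic2_on (\<lambda>z. fst (F z)) (I \<times> UNIV)" and anQ: "real_analytic2_on (\<lambda>z. snd (F z)) (I \<times> UNIV)"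
    using assms(4) unfolding real_analytic_map_on_def by auto
  have fP: "fst (F (t, y)) = p2 t * y ^ 2 + p1 t * y + p0 t" for t y by (simp add: Fdef)
  have fQ: "snd (F (t, y)) = q2 t * y ^ 2 + q1 t * y + q0 t" for t y by (simp add: Fdef)
  note dp = coeff_diff[OF anP _ fP]
  note dq = coeff_diff[OF anQ _ fQ]
  have jac: "jac_det F (x, y) = (deriv p2 x*y^2 + deriv p1 x*y + deriv p0 x)*(2*q2 x*y + q1 x)
                 - (2*p2 x*y + p1 x)*(deriv q2 x*y^2 + deriv q1 x*y + deriv q0 x)" if x: "x \<in> I" for x y
  proof -
    have "((\<lambda>t. fst (F (t, y))) has_real_derivative deriv p2 x*y^2 + deriv p1 x*y + deriv p0 x) (at x)"
      unfolding fP by (intro DERIV_add DERIV_cmult_right dp[OF x])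
    then have 1: "deriv (\<lambda>t. fst (F (t, y))) x = deriv p2 x*y^2 + deriv p1 x*y + deriv p0 x" by (rule DERIV_imp_deriv)
    have "((\<lambda>t. snd (F (t, y))) has_real_derivative deriv q2 x*y^2 + deriv q1 x*y + deriv q0 x) (at x)"
      unfolding fQ by (intro DERIV_add DERIV_cmult_right dq[OF x])
    then have 2: "deriv (\<lambda>t. snd (F (t, y))) x = deriv q2 x*y^2 + deriv q1 x*y + deriv q0 x" by (rule DERIV_imp_deriv)
    have "((\<lambda>t. fst (F (x, t))) has_real_derivative 2*p2 x*y + p1 x) (at y)"
      unfolding fP
    proof -
      have "((\<lambda>t. p2 x * t ^ 2 + p1 x * t + p0 x) has_real_derivative p2 x * (of_nat 2 * (1 * y ^ (2 - Suc 0))) + p1 x * 1 + 0) (at y)"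
        by (intro DERIV_add DERIV_cmult DERIV_power DERIV_ident DERIV_const)
      then show "((\<lambda>t. p2 x * t ^ 2 + p1 x * t + p0 x) has_real_derivative 2*p2 x*y + p1 x) (at y)" by (simp add: mult_ac)
    qed
    then have 3: "deriv (\<lambda>t. fst (F (x, t))) y = 2*p2 x*y + p1 x" by (rule DERIV_imp_deriv)
    have "((\<lambda>t. snd (F (x, t))) has_real_derivative 2*q2 x*y + q1 x) (at y)"
      unfolding fQ
    proof -
      have "((\<lambda>t. q2 x * t ^ 2 + q1 x * t + q0 x) has_real_derivative q2 x * (of_nat 2 * (1 * y ^ (2 - Suc 0))) + q1 x * 1 + 0) (at y)"
        by (intro DERIV_add DERIV_cmult DERIV_power DERIV_ident DERIV_const)
      then show "((\<lambda>t. q2 x * t ^ 2 + q1 x * t + q0 x) has_real_derivative 2*q2 x*y + q1 x) (at y)" by (simp add: mult_ac)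
    qed
    then have 4: "deriv (\<lambda>t. snd (F (x, t))) y = 2*q2 x*y + q1 x" by (rule DERIV_imp_deriv)
    show ?thesis unfolding jac_det_def Let_def using 1 2 3 4 by simp
  qed
  have nz: "(deriv p2 x*y^2 + deriv p1 x*y + deriv p0 x)*(2*q2 x*y + q1 x)
                 - (2*p2 x*y + p1 x)*(deriv q2 x*y^2 + deriv q1 x*y + deriv q0 x) \<noteq> 0" if "x \<in> I" for x y
    using assms(5) jac[OF that, of y] that by auto
  show ?thesis
  proof (cases "\<forall>x\<in>I. p2 x \<noteq> 0")
    case True
    have "inj_on (\<lambda>(x, y). (p2 x * y ^ 2 + p1 x * y + p0 x, q2 x * y ^ 2 + q1 x * y + q0 x)) (I \<times> UNIV)"
      by (rule core[OF assms(1,2) dp dq nz]) (use True in auto)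
    then show ?thesis unfolding Fdef .
  next
    case False
    then have q2nz: "\<forall>x\<in>I. q2 x \<noteq> 0" using assms(6) by blast
    have nz': "(deriv q2 x*y^2 + deriv q1 x*y + deriv q0 x)*(2*p2 x*y + p1 x)
                 - (2*q2 x*y + q1 x)*(deriv p2 x*y^2 + deriv p1 x*y + deriv p0 x) \<noteq> 0" if "x \<in> I" for x y
    proof -
      have "(deriv q2 x*y^2 + deriv q1 x*y + deriv q0 x)*(2*p2 x*y + p1 x)
                 - (2*q2 x*y + q1 x)*(deriv p2 x*y^2 + deriv p1 x*y + deriv p0 x) =
            - ((deriv p2 x*y^2 + deriv p1 x*y + deriv p0 x)*(2*q2 x*y + q1 x)
                 - (2*p2 x*y + p1 x)*(deriv q2 x*y^2 + deriv q1 x*y + deriv q0 x))"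
        by (simp add: algebra_simps)
      then show ?thesis using nz[OF that, of y] by linarith
    qed
    have inj: "inj_on (\<lambda>(x, y). (q2 x * y ^ 2 + q1 x * y + q0 x, p2 x * y ^ 2 + p1 x * y + p0 x)) (I \<times> UNIV)"
      by (rule core[OF assms(1,2) dq dp nz']) (use q2nz in auto)
    show ?thesis unfolding Fdef
    proof (rule inj_onI)
      fix u v assume "u \<in> I \<times> UNIV" "v \<in> I \<times> UNIV"
        and "(\<lambda>(x, y). (p2 x * y ^ 2 + p1 x * y + p0 x, q2 x * y ^ 2 + q1 x * y + q0 x)) u =
             (\<lambda>(x, y). (p2 x * y ^ 2 + p1 x * y + p0 x, q2 x * y ^ 2 + q1 x * y + q0 x)) v"
      moreover obtain a ya where uu: "u = (a, ya)" by (cases u)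
      moreover obtain b yb where vv: "v = (b, yb)" by (cases v)
      ultimately show "u = v" using inj_onD[OF inj, of u v] by simp
    qed
  qed
qed

end
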